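(* Let $q\ge1$ and $t$ be integers with $0\le t<q$, and let $\mathcal{C}_{q,t}^{\mathrm{base}}=\bigcup_{i=0}^{\lfloor (q-t-1)/(t+1)\rfloor}\mathcal{S}_{q-t-i(t+1)}^q.$ If $q\equiv 0\pmod{t+1}$, then $\big(\mathcal{S}_{\mathrm{ins}}^t(\mathcal{C}_{q,t}^{\mathrm{base}})\big)_1$ is an optimal $t$-tail-deletion-correcting code, i.e. it is $t$-tail-deletion-correcting and $\mathsf{DEL}_{\mathrm{cor}}(q,t)=\big|\big(\mathcal{S}_{\mathrm{ins}}^t(\mathcal{C}_{q,t}^{\mathrm{base}})\big)_1\big|=|\mathcal{C}_{q,t}^{\mathrm{base}}|.$ If $q\not\equiv 0\pmod{t+1}$, then $\big(\mathcal{S}_{\mathrm{ins}}^t(\mathcal{C}_{q,t}^{\mathrm{base}})\big)_1\cup\mathcal{S}_1^q$ is an optimal $t$-tail-deletion-correcting code, i.e. it is $t$-tail-deletion-correcting and $\mathsf{DEL}_{\mathrm{cor}}(q,t)=|\mathcal{C}_{q,t}^{\mathrm{base}}|+q.$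
   Context: Let $[q]=\{0,1,\dots,q-1\}$. For $1\le m\le q$, a partial permutation of length $m$ over $[q]$ is a sequence $\pi=(\pi_1,\dots,\pi_m)$ of $m$ pairwise distinct elements of $[q]$; $|\pi|=m$. Let $\mathcal{S}_m^q$ be the set of those of length $m$ (so $\mathcal{S}_1^q$ consists of the $q$ single-symbol sequences) and $\mathcal{S}_{\mathrm{all}}^q=\bigcup_{m=1}^{q}\mathcal{S}_m^q$. A code is any subset of $\mathcal{S}_{\mathrm{all}}^q$. Juxtaposition $\omega\pi$ denotes concatenation with $\omega$ on the left. For $\pi$ of length $m$ and integer $j\ge 0$, $\pi_{\downarrow j}=(\pi_{k+1},\dots,\pi_m)$ with $k=\min(j,m-1)$ (leftmost symbols are deleted; the last symbol is never deleted); $\mathcal{B}_{\mathrm{del}}^t(\pi)=\{\pi_{\downarrow j}:0\le j\le t\}$. A code $\mathcal{C}$ is $t$-tail-deletion-correcting if $\mathcal{B}_{\mathrm{del}}^t(\pi_1)\cap\mathcal{B}_{\mathrm{del}}^t(\pi_2)=\emptyset$ for all distinct $\pi_1,\pi_2\in\mathcal{C}$; $\mathsf{DEL}_{\mathrm{cor}}(q,t)$ is the maximum size of such a code in $\mathcal{S}_{\mathrm{all}}^q$. For $\pi\in\mathcal{S}_{\mathrm{all}}^q$, $\mathcal{S}_{\mathrm{ins}}^t(\pi)$ is the set of all $\omega\pi\in\mathcal{S}_{\mathrm{all}}^q$ with $\omega$ a sequence of exactly $t$ elements of $[q]$ (entries of $\omega\pi$ pairwise distinct). Its elements are listed in increasing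 lexicographic order and $(\mathcal{S}_{\mathrm{ins}}^t(\pi))_1$ denotes the first one. For a code $\mathcal{C}$, $(\mathcal{S}_{\mathrm{ins}}^t(\mathcal{C}))_1=\{(\mathcal{S}_{\mathrm{ins}}^t(\pi))_1:\pi\in\mathcal{C}\}$. *)

theory Defs
  imports Main "HOL-Library.List_Lexorder"
begin

text \<open>Partial permutations over [q] = {0..<q} are represented as lists of naturals.\<close>

definition S :: "nat \<Rightarrow> nat \<Rightarrow> nat list set" where
  "S m q = {xs. length xs = m \<and> distinct xs \<and> set xs \<subseteq> {..<q}}"

definition S_all :: "nat \<Rightarrow> nat list set" where
  "S_all q = (\<Union>m\<in>{1..q}. S m q)"

text \<open>Deletion of the j leftmost symbols, never deleting the last symbol.\<close>
definition tail_del :: "nat list \<Rightarrow> nat \<Rightarrow> nat list" where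
  "tail_del xs j = drop (min j (length xs - 1)) xs"

definition B_del :: "nat \<Rightarrow> nat list \<Rightarrow> nat list set" where
  "B_del t xs = {tail_del xs j | j. j \<le> t}"

definition tail_del_correcting :: "nat \<Rightarrow> nat list set \<Rightarrow> bool" where
  "tail_del_correcting t C =
     (\<forall>p1\<in>C. \<forall>p2\<in>C. p1 \<noteq> p2 \<longrightarrow> B_del t p1 \<inter> B_del t p2 = {})"

definition DEL_cor :: "nat \<Rightarrow> nat \<Rightarrow> nat" where
  "DEL_cor q t = Max {card C | C. C \<subseteq> S_all q \<and> tail_del_correcting t C}"

definition S_ins :: "nat \<Rightarrow> nat \<Rightarrow> nat list \<Rightarrow> nat list set" where
  "S_ins q t xs = {w @ xs | w. length w = t \<and> set w \<subseteq> {..<q} \<and> w @ xs \<in> S_all q}"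

text \<open>First element in increasing lexicographic order (List_Lexorder; all
  elements have equal length).\<close>
definition first_ins :: "nat \<Rightarrow> nat \<Rightarrow> nat list \<Rightarrow> nat list" where
  "first_ins q t xs = Min (S_ins q t xs)"

definition C_base :: "nat \<Rightarrow> nat \<Rightarrow> nat list set" where
  "C_base q t = (\<Union>i\<in>{0..(q - t - 1) div (t + 1)}. S (q - t - i * (t + 1)) q)"

end

theory Submission
  imports Defs
begin

lemma S_finite: "finite (S m q)"
proof -
  have "S m q \<subseteq> {xs. set xs \<subseteq> {..<q} \<and> length xs = m}" by (auto simp: S_def)
  moreover have "finite {xs. set xs \<subseteq> {..<q} \<and> length xs = m}"
    by (rule finite_lists_length_eq) simp
  ultimately show ?thesis by (rule finite_subset)
qed

lemma S_all_finite: "finite (S_all q)"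
  unfolding S_all_def using S_finite by auto

lemma S_all_iff: "xs \<in> S_all q \<longleftrightarrow> 1 \<le> length xs \<and> length xs \<le> q \<and> distinct xs \<and> set xs \<subseteq> {..<q}"
  by (auto simp: S_all_def S_def)

lemma S_ins_nonempty:
  assumes "x \<in> S m q" "1 \<le> m" "m + t \<le> q"
  shows "S_ins q t x \<noteq> {}"
proof -
  have fx: "finite ({..<q} - set x)" by simp
  have "card ({..<q} - set x) = q - m"
    using assms(1) by (auto simp: S_def card_Diff_subset distinct_card)
  hence "t \<le> card ({..<q} - set x)" using assms by simp
  then obtain T where T: "T \<subseteq> {..<q} - set x" "card T = t" "finite T"
    using obtain_subset_with_card_n by metis
  define w where "w = sorted_list_of_set T"
  have w: "length w = t" "distinct w" "set w = T" using T by (auto simp: w_def)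
  have "w @ x \<in> S_ins q t x"
    unfolding S_ins_def using w T assms by (auto simp: S_all_iff S_def)
  thus ?thesis by blast
qed

lemma first_ins_props:
  assumes "x \<in> S m q" "1 \<le> m" "m + t \<le> q"
  shows "\<exists>w. first_ins q t x = w @ x \<and> length w = t" "first_ins q t x \<in> S_all q"
proof -
  have fin: "finite (S_ins q t x)"
    by (rule finite_subset[OF _ S_all_finite[of q]]) (auto simp: S_ins_def)
  have "first_ins q t x \<in> S_ins q t x"
    unfolding first_ins_def using Min_in[OF fin S_ins_nonempty[OF assms]] .
  thus "\<exists>w. first_ins q t x = w @ x \<and> length w = t" "first_ins q t x \<in> S_all q"
    by (auto simp: S_ins_def)
qed

lemma A5: fixes q t i :: nat assumes "t < q" "i \<le> (q-t-1) div (t+1)" shows "i*(t+1) \<le> q-t-1"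
  using assms(2) less_eq_div_iff_mult_less_eq by force
lemma A4: fixes q t :: nat assumes "t<q" shows "q-t-((q-t-1) div (t+1))*(t+1) \<le> t+1"
  by (metis (no_types, lifting) ext add_gr_0 assms dividend_less_div_times
    le_add_diff_inverse le_add_diff_inverse2 le_diff_conv
    less_iff_succ_less_eq less_imp_le_nat less_numeral_extra(1)
    nat_add_left_cancel_le)
lemma A1: fixes q t L1 L2 j1 j2 :: nat assumes "L1 \<le> q" "L2 \<le> q" "(t+1) dvd (q-L1)" "(t+1) dvd (q-L2)"
 "j1 \<le> t" "j2 \<le> t" "L1 - j1 = L2 - j2" "j1 \<le> L1" "j2 \<le> L2" shows "L1 = L2"
proof -
  obtain a where a: "q - L1 = a*(t+1)" using assms(3) by (auto simp: dvd_def mult.commute)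
  obtain b where b: "q - L2 = b*(t+1)" using assms(4) by (auto simp: dvd_def mult.commute)
  have "a = b"
  proof (rule ccontr)
    assume "a \<noteq> b"
    hence "Suc a \<le> b \<or> Suc b \<le> a" by linarith
    thus False
    proof
      assume "Suc a \<le> b"
      hence "Suc a * (t+1) \<le> b*(t+1)" by (rule mult_le_mono1)
      thus False using a b assms by simp
    next
      assume "Suc b \<le> a"
      hence "Suc b * (t+1) \<le> a*(t+1)" by (rule mult_le_mono1)
      thus False using a b assms by simp
    qed
  qed
  thus ?thesis using a b assms by simp
qed
lemma A3: fixes q t :: nat assumes "q mod (t+1) = 0" "t<q" shows "q-t-((q-t-1) div (t+1))*(t+1) = 1"
proof -
  obtain a where a: "q = a*(t+1)" using assms(1) by (metis mod_eq_0_iff_dvd dvd_def mult.commute)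
  have "a \<ge> 1" using a assms(2) by (cases a) auto
  hence "q - t - 1 = (a-1)*(t+1)" using a by (simp add: diff_mult_distrib)
  hence "(q-t-1) div (t+1) = a - 1" by (metis nonzero_mult_div_cancel_right add_gr_0 less_numeral_extra(1) less_not_refl2)
  thus ?thesis using \<open>q-t-1 = (a-1)*(t+1)\<close> assms(2) by simp
qed
lemma A2: fixes q t L :: nat assumes "t < q" "L \<le> q" "q-t-((q-t-1) div (t+1))*(t+1) \<le> L"
  shows "\<exists>i\<le>(q-t-1) div (t+1). q-t-i*(t+1) \<le> L \<and> L \<le> q-t-i*(t+1)+t"
proof -
  define k where "k = (q-t-1) div (t+1)"
  define i where "i = (q-L) div (t+1)"
  define s where "s = (q-L) mod (t+1)"
  have dec: "q - L = i*(t+1) + s" unfolding i_def s_def by (rule div_mult_mod_eq[symmetric])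
  have s: "s \<le> t" unfolding s_def by (metis Suc_eq_plus1 less_Suc_eq_le mod_less_divisor zero_less_Suc)
  have kk: "k*(t+1) \<le> q-t-1" using A5[OF assms(1), of k] by (simp add: k_def)
  have "i*(t+1) \<le> q - L" using dec by simp
  also have "\<dots> \<le> t + k*(t+1)" using assms(3) kk unfolding k_def by linarith
  also have "\<dots> < Suc k * (t+1)" by simp
  finally have "i < Suc k" by (rule mult_less_cancel2[THEN iffD1, THEN conjunct2])
  hence ik: "i \<le> k" by simp
  have "i*(t+1) \<le> q-t-1" using A5[OF assms(1), of i] ik by (simp add: k_def)
  hence "q-t-i*(t+1) \<le> L \<and> L \<le> q-t-i*(t+1)+t" using dec s assms by linarith
  thus ?thesis using ik unfolding k_def by blast
qed

lemma tail_del_long: "j \<le> t \<Longrightarrow> t + 1 \<le> length p \<Longrightarrow> tail_del p j = drop j p"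
  by (simp add: tail_del_def)

lemma B_del_single: "B_del t [a] = {[a]}"
  by (auto simp: B_del_def tail_del_def)

lemma C_base_elem:
  assumes "t < q" "x \<in> C_base q t"
  shows "\<exists>w i. first_ins q t x = w @ x \<and> length w = t \<and> i \<le> (q-t-1) div (t+1)
      \<and> length x = q-t-i*(t+1) \<and> first_ins q t x \<in> S_all q \<and> x \<in> S (q-t-i*(t+1)) q"
proof -
  obtain i where i: "i \<le> (q-t-1) div (t+1)" "x \<in> S (q-t-i*(t+1)) q"
    using assms(2) by (auto simp: C_base_def)
  have "i*(t+1) \<le> q-t-1" using A5[OF assms(1) i(1)] .
  hence m: "1 \<le> q-t-i*(t+1)" "q-t-i*(t+1) + t \<le> q" using assms(1) by linarith+
  show ?thesis using first_ins_props[OF i(2) m] i by (auto simp: S_def)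
qed

lemma F_len:
  assumes "t < q" "x \<in> C_base q t"
  shows "t + 1 \<le> length (first_ins q t x)" "length (first_ins q t x) \<le> q"
    "(t+1) dvd (q - length (first_ins q t x))" "drop t (first_ins q t x) = x"
proof -
  obtain w i where wi: "first_ins q t x = w @ x" "length w = t" "i \<le> (q-t-1) div (t+1)"
      "length x = q-t-i*(t+1)"
    using C_base_elem[OF assms] by blast
  have "i*(t+1) \<le> q-t-1" using A5[OF assms(1) wi(3)] .
  hence L: "length (first_ins q t x) = q - i*(t+1)" "q - i*(t+1) \<ge> t+1"
    using wi assms(1) by auto
  show "t + 1 \<le> length (first_ins q t x)" "length (first_ins q t x) \<le> q" using L by auto
  have "q - length (first_ins q t x) = i*(t+1)" using L by simp
  thus "(t+1) dvd (q - length (first_ins q t x))" by (metis dvd_triv_right)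
  show "drop t (first_ins q t x) = x" using wi by simp
qed

lemma pairF:
  assumes "t < q" "x1 \<in> C_base q t" "x2 \<in> C_base q t"
    "z \<in> B_del t (first_ins q t x1)" "z \<in> B_del t (first_ins q t x2)"
  shows "first_ins q t x1 = first_ins q t x2"
proof -
  let ?p1 = "first_ins q t x1" and ?p2 = "first_ins q t x2"
  obtain j1 where j1: "j1 \<le> t" "z = tail_del ?p1 j1" using assms(4) by (auto simp: B_del_def)
  obtain j2 where j2: "j2 \<le> t" "z = tail_del ?p2 j2" using assms(5) by (auto simp: B_del_def)
  note F1 = F_len[OF assms(1,2)] and F2 = F_len[OF assms(1,3)]
  have z1: "z = drop j1 ?p1" using j1 F1 tail_del_long by simp
  have z2: "z = drop j2 ?p2" using j2 F2 tail_del_long by simp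
  have "length ?p1 - j1 = length ?p2 - j2" using z1 z2 by (metis length_drop)
  hence eqL: "length ?p1 = length ?p2"
    using A1[of "length ?p1" q "length ?p2" t j1 j2] F1 F2 j1 j2 by linarith
  hence "j1 = j2" using \<open>length ?p1 - j1 = length ?p2 - j2\<close> F1 j1 j2 by linarith
  have "x1 = drop (t - j1) z" using z1 F1(4) j1 by (simp add: drop_drop)
  moreover have "x2 = drop (t - j1) z" using z2 F2(4) j2 \<open>j1 = j2\<close> by (simp add: drop_drop)
  ultimately show ?thesis by simp
qed

lemma pairFS:
  assumes "t < q" "x \<in> C_base q t" "q mod (t+1) \<noteq> 0"
    "z \<in> B_del t (first_ins q t x)" "z \<in> B_del t [a]"
  shows False
proof -
  let ?p = "first_ins q t x"
  obtain j where j: "j \<le> t" "z = tail_del ?p j" using assms(4) by (auto simp: B_del_def)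
  note F = F_len[OF assms(1,2)]
  have "z = [a]" using assms(5) B_del_single by auto
  have zd: "z = drop j ?p" using j F tail_del_long by simp
  have "length z = length ?p - j" using zd by simp
  moreover have "length z = 1" using \<open>z = [a]\<close> by simp
  ultimately have "length ?p - j = 1" by simp
  hence "length ?p = t + 1" using F j by linarith
  hence "(t+1) dvd (q - (t+1))" using F by simp
  hence "(t+1) dvd q" using assms(1)
    by (metis dvd_add_triv_right_iff le_add_diff_inverse2 Suc_eq_plus1 Suc_leI)
  thus False using assms(3) by auto
qed

lemma window_bound:
  assumes "tail_del_correcting t C" "C \<subseteq> S_all q" "1 \<le> m"
  shows "card {p\<in>C. m \<le> length p \<and> length p \<le> m + t} \<le> card (S m q)"
proof -
  let ?P = "{p\<in>C. m \<le> length p \<and> length p \<le> m + t}"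
  let ?f = "\<lambda>p. drop (length p - m) p"
  have inb: "?f p \<in> B_del t p" if "p \<in> ?P" for p
  proof -
    have "tail_del p (length p - m) = ?f p" using that assms(3) by (simp add: tail_del_def)
    moreover have "length p - m \<le> t" using that by auto
    ultimately show ?thesis unfolding B_del_def by (auto intro!: exI[of _ "length p - m"])
  qed
  have "inj_on ?f ?P"
  proof (rule inj_onI)
    fix p1 p2 assume h: "p1 \<in> ?P" "p2 \<in> ?P" "?f p1 = ?f p2"
    show "p1 = p2"
    proof (rule ccontr)
      assume "p1 \<noteq> p2"
      hence "B_del t p1 \<inter> B_del t p2 = {}" using assms(1) h unfolding tail_del_correcting_def by blast
      thus False using inb[OF h(1)] inb[OF h(2)] h(3) by auto
    qed
  qed
  moreover have "?f ` ?P \<subseteq> S m q"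
  proof
    fix y assume "y \<in> ?f ` ?P"
    then obtain p where p: "p \<in> ?P" "y = ?f p" by blast
    hence "p \<in> S_all q" using assms(2) by blast
    thus "y \<in> S m q" using p by (auto simp: S_all_iff S_def dest: in_set_dropD)
  qed
  ultimately show ?thesis using card_inj_on_le S_finite by blast
qed

lemma card_C_base:
  assumes "t < q"
  shows "card (C_base q t) = (\<Sum>i\<in>{0..(q-t-1) div (t+1)}. card (S (q-t-i*(t+1)) q))"
  unfolding C_base_def
proof (rule card_UN_disjoint)
  show "finite {0..(q-t-1) div (t+1)}" by simp
  show "\<forall>i\<in>{0..(q-t-1) div (t+1)}. finite (S (q-t-i*(t+1)) q)" using S_finite by blast
  show "\<forall>i\<in>{0..(q-t-1) div (t+1)}. \<forall>j\<in>{0..(q-t-1) div (t+1)}. i \<noteq> j \<longrightarrow>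
      S (q-t-i*(t+1)) q \<inter> S (q-t-j*(t+1)) q = {}"
  proof (intro ballI impI)
    fix i j assume h: "i \<in> {0..(q-t-1) div (t+1)}" "j \<in> {0..(q-t-1) div (t+1)}" "i \<noteq> j"
    have "i*(t+1) \<le> q-t-1" "j*(t+1) \<le> q-t-1" using A5[OF assms] h by auto
    moreover have "i*(t+1) \<noteq> j*(t+1)" using h(3) by (metis Suc_eq_plus1 mult_cancel2 nat.distinct(1))
    ultimately have "q-t-i*(t+1) \<noteq> q-t-j*(t+1)" by linarith
    thus "S (q-t-i*(t+1)) q \<inter> S (q-t-j*(t+1)) q = {}" by (auto simp: S_def)
  qed
qed

lemma upper_bound:
  assumes "t < q" "tail_del_correcting t C" "C \<subseteq> S_all q"
  shows "card C \<le> card (C_base q t) + (if q mod (t+1) = 0 then 0 else q)"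
proof -
  define k where "k = (q-t-1) div (t+1)"
  define m where "m i = q-t-i*(t+1)" for i
  define P where "P i = {p\<in>C. m i \<le> length p \<and> length p \<le> m i + t}" for i
  define P0 where "P0 = {p\<in>C. 1 \<le> length p \<and> length p \<le> 1 + t}"
  have finC: "finite C" using assms(3) S_all_finite finite_subset by blast
  have mk: "m k \<le> t + 1" unfolding m_def k_def using A4[OF assms(1)] .
  have cov: "C \<subseteq> P0 \<union> (\<Union>i\<in>{0..k}. P i)"
  proof
    fix p assume p: "p \<in> C"
    hence L: "1 \<le> length p" "length p \<le> q" using assms(3) by (auto simp: S_all_iff)
    show "p \<in> P0 \<union> (\<Union>i\<in>{0..k}. P i)"
    proof (cases "m k \<le> length p")
      case True
      then obtain i where "i \<le> k" "m i \<le> length p \<and> length p \<le> m i + t"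
        using A2[OF assms(1) L(2)] unfolding m_def k_def by blast
      thus ?thesis using p by (auto simp: P_def)
    next
      case False
      thus ?thesis using p L mk by (auto simp: P0_def)
    qed
  qed
  have cov0: "C \<subseteq> (\<Union>i\<in>{0..k}. P i)" if "q mod (t+1) = 0"
  proof
    fix p assume p: "p \<in> C"
    hence L: "1 \<le> length p" "length p \<le> q" using assms(3) by (auto simp: S_all_iff)
    have "m k = 1" unfolding m_def k_def using A3[OF that assms(1)] .
    then obtain i where "i \<le> k" "m i \<le> length p \<and> length p \<le> m i + t"
      using A2[OF assms(1) L(2)] L unfolding m_def k_def by auto
    thus "p \<in> (\<Union>i\<in>{0..k}. P i)" using p by (auto simp: P_def)
  qed
  have mi: "1 \<le> m i" if "i \<in> {0..k}" for i
    using A5[OF assms(1), of i] that assms(1) unfolding m_def k_def by auto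
  have sumP: "card (\<Union>i\<in>{0..k}. P i) \<le> card (C_base q t)"
  proof -
    have "card (\<Union>i\<in>{0..k}. P i) \<le> (\<Sum>i\<in>{0..k}. card (P i))" by (rule card_UN_le) simp
    also have "\<dots> \<le> (\<Sum>i\<in>{0..k}. card (S (m i) q))"
      by (rule sum_mono) (unfold P_def, rule window_bound[OF assms(2,3) mi])
    also have "\<dots> = card (C_base q t)" using card_C_base[OF assms(1)] unfolding m_def k_def by simp
    finally show ?thesis .
  qed
  have "card P0 \<le> card (S 1 q)" unfolding P0_def by (rule window_bound[OF assms(2,3)]) simp
  moreover have "card (S 1 q) = q"
  proof -
    have "S 1 q = (\<lambda>a. [a]) ` {..<q}" by (auto simp: S_def length_Suc_conv)
    thus ?thesis by (simp add: card_image inj_on_def)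
  qed
  ultimately have P0b: "card P0 \<le> q" by simp
  show ?thesis
  proof (cases "q mod (t+1) = 0")
    case True
    have "finite (\<Union>i\<in>{0..k}. P i)" using finC by (auto simp: P_def)
    have "card C \<le> card (\<Union>i\<in>{0..k}. P i)"
      by (rule card_mono[OF \<open>finite (\<Union>i\<in>{0..k}. P i)\<close> cov0[OF True]])
    thus ?thesis using sumP True by simp
  next
    case False
    have fP: "finite (\<Union>i\<in>{0..k}. P i)" "finite P0" using finC by (auto simp: P_def P0_def)
    have "card C \<le> card (P0 \<union> (\<Union>i\<in>{0..k}. P i))" by (rule card_mono) (use fP cov in auto)
    also have "\<dots> \<le> card P0 + card (\<Union>i\<in>{0..k}. P i)" by (rule card_Un_le)
    finally show ?thesis using sumP P0b False by simp
  qed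
qed

lemma card_S1: "card (S 1 q) = q"
proof -
  have "S 1 q = (\<lambda>a. [a]) ` {..<q}" by (auto simp: S_def length_Suc_conv)
  thus ?thesis by (simp add: card_image inj_on_def)
qed

lemma F_sub: "t < q \<Longrightarrow> first_ins q t ` C_base q t \<subseteq> S_all q"
  using C_base_elem by blast

lemma S1_sub: "1 \<le> q \<Longrightarrow> S 1 q \<subseteq> S_all q"
  by (auto simp: S_all_def)

lemma F_card: "t < q \<Longrightarrow> card (first_ins q t ` C_base q t) = card (C_base q t)"
  by (rule card_image, rule inj_onI) (metis F_len(4))

lemma F_tdc: "t < q \<Longrightarrow> tail_del_correcting t (first_ins q t ` C_base q t)"
  unfolding tail_del_correcting_def using pairF by blast

lemma FS_tdc:
  assumes "t < q" "q mod (t+1) \<noteq> 0"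
  shows "tail_del_correcting t (first_ins q t ` C_base q t \<union> S 1 q)"
  unfolding tail_del_correcting_def
proof (intro ballI impI)
  fix p1 p2 assume h: "p1 \<in> first_ins q t ` C_base q t \<union> S 1 q"
    "p2 \<in> first_ins q t ` C_base q t \<union> S 1 q" "p1 \<noteq> p2"
  have single: "p \<in> S 1 q \<Longrightarrow> \<exists>a. p = [a]" for p by (auto simp: S_def length_Suc_conv)
  show "B_del t p1 \<inter> B_del t p2 = {}"
  proof (rule ccontr)
    assume "B_del t p1 \<inter> B_del t p2 \<noteq> {}"
    then obtain z where z: "z \<in> B_del t p1" "z \<in> B_del t p2" by blast
    show False
    proof (cases "p1 \<in> S 1 q")
      case True
      then obtain a where a: "p1 = [a]" using single by blast
      show False
      proof (cases "p2 \<in> S 1 q")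
        case True
        then obtain b where "p2 = [b]" using single by blast
        thus False using a z h(3) B_del_single by auto
      next
        case False
        then obtain x where "x \<in> C_base q t" "p2 = first_ins q t x" using h(2) by blast
        thus False using pairFS[OF assms(1) _ assms(2)] z a by blast
      qed
    next
      case False
      then obtain x where x: "x \<in> C_base q t" "p1 = first_ins q t x" using h(1) by blast
      show False
      proof (cases "p2 \<in> S 1 q")
        case True
        then obtain b where "p2 = [b]" using single by blast
        thus False using pairFS[OF assms(1) x(1) assms(2)] z x by blast
      next
        case False
        then obtain y where "y \<in> C_base q t" "p2 = first_ins q t y" using h(2) by blast
        thus False using pairF[OF assms(1) x(1)] z x h(3) by blast
      qed
    qed
  qed
qed

lemma DEL_eq:
  assumes "t < q" "D \<subseteq> S_all q" "tail_del_correcting t D"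
    "card D = card (C_base q t) + (if q mod (t+1) = 0 then 0 else q)"
  shows "DEL_cor q t = card D"
  unfolding DEL_cor_def
proof (rule Max_eqI)
  have "{card C |C. C \<subseteq> S_all q \<and> tail_del_correcting t C} \<subseteq> card ` Pow (S_all q)" by auto
  thus "finite {card C |C. C \<subseteq> S_all q \<and> tail_del_correcting t C}"
    using S_all_finite finite_subset by blast
  show "card D \<in> {card C |C. C \<subseteq> S_all q \<and> tail_del_correcting t C}" using assms by blast
  fix y assume "y \<in> {card C |C. C \<subseteq> S_all q \<and> tail_del_correcting t C}"
  thus "y \<le> card D" using upper_bound[OF assms(1)] assms(4) by auto
qed

theorem mainTheorem10:
  fixes q t :: nat
  assumes "q \<ge> 1" and "t < q"
  shows "(q mod (t + 1) = 0 \<longrightarrow>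
            (first_ins q t ` C_base q t \<subseteq> S_all q
             \<and> tail_del_correcting t (first_ins q t ` C_base q t)
             \<and> DEL_cor q t = card (first_ins q t ` C_base q t)
             \<and> DEL_cor q t = card (C_base q t)))
       \<and> (q mod (t + 1) \<noteq> 0 \<longrightarrow>
            (first_ins q t ` C_base q t \<union> S 1 q \<subseteq> S_all q
             \<and> tail_del_correcting t (first_ins q t ` C_base q t \<union> S 1 q)
             \<and> DEL_cor q t = card (first_ins q t ` C_base q t \<union> S 1 q)
             \<and> DEL_cor q t = card (C_base q t) + q))"
proof (intro conjI impI)
  assume h: "q mod (t + 1) = 0"
  show "first_ins q t ` C_base q t \<subseteq> S_all q" using F_sub assms by blast
  show "tail_del_correcting t (first_ins q t ` C_base q t)" using F_tdc assms by blast
  show "DEL_cor q t = card (first_ins q t ` C_base q t)"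
    by (rule DEL_eq) (use assms h F_sub F_tdc F_card in auto)
  thus "DEL_cor q t = card (C_base q t)" using F_card assms by simp
next
  assume h: "q mod (t + 1) \<noteq> 0"
  show sub: "first_ins q t ` C_base q t \<union> S 1 q \<subseteq> S_all q" using F_sub S1_sub assms by blast
  show tdc: "tail_del_correcting t (first_ins q t ` C_base q t \<union> S 1 q)" using FS_tdc assms h by blast
  have "t \<noteq> 0" using h by (metis Suc_eq_plus1 add_0 mod_Suc_eq mod_less_divisor mod_mod_trivial One_nat_def less_one zero_less_Suc mod_by_1 gr_zeroI)
  have disj: "first_ins q t ` C_base q t \<inter> S 1 q = {}"
  proof (rule ccontr)
    assume "first_ins q t ` C_base q t \<inter> S 1 q \<noteq> {}"
    then obtain x where "x \<in> C_base q t" "first_ins q t x \<in> S 1 q" by blast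
    thus False using F_len(1)[OF assms(2), of x] \<open>t \<noteq> 0\<close> by (auto simp: S_def)
  qed
  have fin: "finite (first_ins q t ` C_base q t)" "finite (S 1 q)"
    using F_sub[OF assms(2)] S_all_finite finite_subset S_finite by blast+
  have cardU: "card (first_ins q t ` C_base q t \<union> S 1 q) = card (C_base q t) + q"
    using card_Un_disjoint[OF fin disj] F_card[OF assms(2)] card_S1 by simp
  show "DEL_cor q t = card (first_ins q t ` C_base q t \<union> S 1 q)"
    by (rule DEL_eq) (use assms h sub tdc cardU in auto)
  thus "DEL_cor q t = card (C_base q t) + q" using cardU by simp
qed

end
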